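(* Let $N\geq2$, $\gamma\geq0$, $\alpha\in(\frac{N}{2N-1},1)$ and $p>1$ with $2<p+1-\frac{2\gamma}{N-2\alpha}<\frac{2N}{N-2\alpha}$. Then the set $A_{a,b}$ is independent of $(a,b)\in(0,\infty)\times[0,\infty)$.
   Context: $H^\alpha_{rd}$ is the space of radial functions in the fractional Sobolev space $H^\alpha(\mathbb{R}^N)$ with norm $\|u\|_{H^\alpha}=(\|u\|_{L^2}^2+\|(-\Delta)^{\alpha/2}u\|_{L^2}^2)^{1/2}$. $S(\phi):=\frac12\|\phi\|_{H^\alpha}^2-\frac{1}{p+1}\int|x|^\gamma|\phi|^{p+1}dx$; for $\lambda>0$, $\phi^\lambda_{a,b}:=\lambda^a\phi(\cdot/\lambda^b)$; $K_{a,b}(\phi):=\partial_\lambda(S(\phi^\lambda_{a,b}))|_{\lambda=1}$; $m_{a,b}:=\inf\{S(\phi):0\neq\phi\in H^\alpha_{rd},\ K_{a,b}(\phi)=0\}$; $A_{a,b}:=\{\phi\in H^\alpha_{rd}:\ S(\phi)<m_{a,b},\ K_{a,b}(\phi)>0\}$. *)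

theory Defs
  imports "HOL-Analysis.Analysis"
begin

text \<open>Functions on R^N are modelled as complex-valued functions on real^'n, N = CARD('n).
  The fractional seminorm is given by the Gagliardo double integral with the
  normalising constant C(N,alpha), which equals the Fourier-side norm of
  (-Delta)^(alpha/2) u in L^2 (Di Nezza--Palatucci--Valdinoci, Prop. 3.4/3.6).\<close>

definition frac_const :: "real \<Rightarrow> ('n::finite itself) \<Rightarrow> real" where
  "frac_const \<alpha> TYPE('n) =
     inverse (integral\<^sup>L lborel
       (\<lambda>\<zeta>::real^'n. (1 - cos (\<zeta> \<bullet> (SOME e. e \<in> (Basis :: (real^'n) set))))
                       / norm \<zeta> powr (real CARD('n) + 2 * \<alpha>)))"

definition L2sq :: "(real^'n::finite \<Rightarrow> complex) \<Rightarrow> ennreal" where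
  "L2sq u = (\<integral>\<^sup>+ x. ennreal ((cmod (u x))\<^sup>2) \<partial>lborel)"

definition gagliardo :: "real \<Rightarrow> (real^'n::finite \<Rightarrow> complex) \<Rightarrow> ennreal" where
  "gagliardo \<alpha> u = (\<integral>\<^sup>+ x. \<integral>\<^sup>+ y.
      ennreal ((cmod (u x - u y))\<^sup>2 / dist x y powr (real CARD('n) + 2 * \<alpha>)) \<partial>lborel \<partial>lborel)"

definition frac_grad_sq :: "real \<Rightarrow> (real^'n::finite \<Rightarrow> complex) \<Rightarrow> real" where
  "frac_grad_sq \<alpha> u = frac_const \<alpha> TYPE('n) / 2 * enn2real (gagliardo \<alpha> u)"

definition Hs :: "real \<Rightarrow> (real^'n::finite \<Rightarrow> complex) set" where
  "Hs \<alpha> = {u. u \<in> borel_measurable lborel \<and> L2sq u < \<infinity> \<and> gagliardo \<alpha> u < \<infinity>}"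

definition radial :: "(real^'n::finite \<Rightarrow> complex) \<Rightarrow> bool" where
  "radial u \<longleftrightarrow> (\<exists>g::real \<Rightarrow> complex. AE x in lborel. u x = g (norm x))"

definition Hrd :: "real \<Rightarrow> (real^'n::finite \<Rightarrow> complex) set" where
  "Hrd \<alpha> = {u \<in> Hs \<alpha>. radial u}"

definition Hnorm_sq :: "real \<Rightarrow> (real^'n::finite \<Rightarrow> complex) \<Rightarrow> real" where
  "Hnorm_sq \<alpha> u = enn2real (L2sq u) + frac_grad_sq \<alpha> u"

definition action :: "real \<Rightarrow> real \<Rightarrow> real \<Rightarrow> (real^'n::finite \<Rightarrow> complex) \<Rightarrow> real" where
  "action \<alpha> \<gamma> p \<phi> = 1/2 * Hnorm_sq \<alpha> \<phi>
     - 1 / (p + 1) * integral\<^sup>L lborel (\<lambda>x. norm x powr \<gamma> * cmod (\<phi> x) powr (p + 1))"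

definition scaling :: "real \<Rightarrow> real \<Rightarrow> real \<Rightarrow> (real^'n::finite \<Rightarrow> complex) \<Rightarrow> (real^'n \<Rightarrow> complex)" where
  "scaling a b l \<phi> = (\<lambda>x. complex_of_real (l powr a) * \<phi> ((1 / l powr b) *\<^sub>R x))"

definition Kfun :: "real \<Rightarrow> real \<Rightarrow> real \<Rightarrow> real \<Rightarrow> real \<Rightarrow> (real^'n::finite \<Rightarrow> complex) \<Rightarrow> real" where
  "Kfun \<alpha> \<gamma> p a b \<phi> = deriv (\<lambda>l. action \<alpha> \<gamma> p (scaling a b l \<phi>)) 1"

definition mval :: "real \<Rightarrow> real \<Rightarrow> real \<Rightarrow> real \<Rightarrow> real \<Rightarrow> ('n::finite) itself \<Rightarrow> ereal" where
  "mval \<alpha> \<gamma> p a b TYPE('n) = Inf ((\<lambda>\<phi>. ereal (action \<alpha> \<gamma> p \<phi>)) `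
      {\<phi> :: real^'n \<Rightarrow> complex. \<phi> \<in> Hrd \<alpha> \<and> \<not> (AE x in lborel. \<phi> x = 0)
        \<and> Kfun \<alpha> \<gamma> p a b \<phi> = 0})"

definition Aset :: "real \<Rightarrow> real \<Rightarrow> real \<Rightarrow> real \<Rightarrow> real \<Rightarrow> (real^'n::finite \<Rightarrow> complex) set" where
  "Aset \<alpha> \<gamma> p a b = {\<phi> \<in> Hrd \<alpha>. ereal (action \<alpha> \<gamma> p \<phi>) < mval \<alpha> \<gamma> p a b TYPE('n)
        \<and> Kfun \<alpha> \<gamma> p a b \<phi> > 0}"

end

theory Submission
  imports Defs
begin

lemma nn_scale:
  fixes f :: "real^'n::finite \<Rightarrow> ennreal"
  assumes [measurable]: "f \<in> borel_measurable borel" and s: "s > 0"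
  shows "(\<integral>\<^sup>+x. f ((1/s) *\<^sub>R x) \<partial>lborel) = ennreal (s ^ CARD('n)) * (\<integral>\<^sup>+x. f x \<partial>lborel)"
proof -
  have "(\<integral>\<^sup>+x. f ((1/s) *\<^sub>R x) \<partial>lborel) = 
     (\<integral>\<^sup>+x. f ((1/s) *\<^sub>R x) \<partial>(density (distr lborel borel (\<lambda>x. 0 + s *\<^sub>R x)) (\<lambda>_. \<bar>s\<bar>^DIM(real^'n))))"
    using s by (subst lborel_affine[of s 0]) auto
  also have "\<dots> = ennreal (s ^ CARD('n)) * (\<integral>\<^sup>+x. f x \<partial>lborel)"
    using s by (simp add: nn_integral_density nn_integral_distr nn_integral_cmult ennreal_power)
  finally show ?thesis .
qed

lemma int_scale:
  fixes f :: "real^'n::finite \<Rightarrow> real"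
  assumes [measurable]: "f \<in> borel_measurable borel" and s: "s > 0"
  shows "(\<integral>x. f ((1/s) *\<^sub>R x) \<partial>lborel) = s ^ CARD('n) * (\<integral>x. f x \<partial>lborel)"
proof -
  have "(\<integral>x. f ((1/s) *\<^sub>R x) \<partial>lborel) = 
     (\<integral>x. f ((1/s) *\<^sub>R x) \<partial>(density (distr lborel borel (\<lambda>x. 0 + s *\<^sub>R x)) (\<lambda>_. \<bar>s\<bar>^DIM(real^'n))))"
    using s by (subst lborel_affine[of s 0]) auto
  also have "\<dots> = s ^ CARD('n) * (\<integral>x. f x \<partial>lborel)"
    using s by (subst integral_density) (auto simp: integral_distr)
  finally show ?thesis .
qed

definition G :: "real \<Rightarrow> real \<Rightarrow> (real^'n::finite \<Rightarrow> complex) \<Rightarrow> (real^'n \<Rightarrow> complex)" where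
  "G c s \<phi> = (\<lambda>x. complex_of_real c * \<phi> ((1/s) *\<^sub>R x))"

lemma L2sq_G:
  fixes \<phi> :: "real^'n::finite \<Rightarrow> complex"
  assumes [measurable]: "\<phi> \<in> borel_measurable borel" and s: "s > 0" and c: "c > 0"
  shows "L2sq (G c s \<phi>) = ennreal (c^2 * s ^ CARD('n)) * L2sq \<phi>"
proof -
  have "L2sq (G c s \<phi>) = (\<integral>\<^sup>+x. ennreal (c^2) * ennreal ((cmod (\<phi> ((1/s) *\<^sub>R x)))\<^sup>2) \<partial>lborel)"
    unfolding L2sq_def G_def using c
    by (intro nn_integral_cong) (simp add: norm_mult power_mult_distrib ennreal_mult)
  also have "\<dots> = ennreal (c^2) * (\<integral>\<^sup>+x. ennreal ((cmod (\<phi> ((1/s) *\<^sub>R x)))\<^sup>2) \<partial>lborel)"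
    by (rule nn_integral_cmult) measurable
  also have "\<dots> = ennreal (c^2) * (ennreal (s ^ CARD('n)) * L2sq \<phi>)"
  proof -
    have [measurable]: "(\<lambda>a. ennreal ((cmod (\<phi> a))\<^sup>2)) \<in> borel_measurable borel" by measurable
    show ?thesis unfolding L2sq_def by (subst nn_scale[OF _ s]) auto
  qed
  finally show ?thesis using s c by (simp add: ennreal_mult mult.assoc)
qed

lemma gag_G:
  fixes \<phi> :: "real^'n::finite \<Rightarrow> complex"
  assumes [measurable]: "\<phi> \<in> borel_measurable borel" and s: "s > 0" and c: "c > 0"
  shows "gagliardo \<alpha> (G c s \<phi>) = ennreal (c^2 * s powr (real CARD('n) - 2 * \<alpha>)) * gagliardo \<alpha> \<phi>"
proof -
  define e where "e = real CARD('n) + 2 * \<alpha>"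
  define F where "F = (\<lambda>u v. ennreal ((cmod (\<phi> u - \<phi> v))\<^sup>2 / dist u v powr e))"
  have Fm[measurable]: "case_prod F \<in> borel_measurable (borel \<Otimes>\<^sub>M lborel)"
    unfolding F_def by measurable
  have Fm2[measurable]: "F u \<in> borel_measurable borel" for u
    unfolding F_def by measurable
  have H[measurable]: "(\<lambda>u. \<integral>\<^sup>+ y. F u y \<partial>lborel) \<in> borel_measurable borel"
    by measurable
  have pt: "ennreal ((cmod (G c s \<phi> x - G c s \<phi> y))\<^sup>2 / dist x y powr e)
      = ennreal (c^2 / s powr e) * F ((1/s) *\<^sub>R x) ((1/s) *\<^sub>R y)" for x y
  proof -
    have d: "dist x y = s * dist ((1/s) *\<^sub>R x) ((1/s) *\<^sub>R y)"
      using s by (simp add: dist_norm scaleR_diff_right[symmetric])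
    have "(cmod (G c s \<phi> x - G c s \<phi> y))\<^sup>2 = c^2 * (cmod (\<phi> ((1/s) *\<^sub>R x) - \<phi> ((1/s) *\<^sub>R y)))\<^sup>2"
      unfolding G_def using c by (simp add: right_diff_distrib[symmetric] norm_mult power_mult_distrib)
    then show ?thesis unfolding F_def d using s c
      by (simp add: powr_mult ennreal_mult[symmetric] divide_nonneg_nonneg)
  qed
  have "gagliardo \<alpha> (G c s \<phi>) = (\<integral>\<^sup>+ x. \<integral>\<^sup>+ y. ennreal (c^2 / s powr e) * F ((1/s) *\<^sub>R x) ((1/s) *\<^sub>R y) \<partial>lborel \<partial>lborel)"
    unfolding gagliardo_def e_def[symmetric] pt ..
  also have "\<dots> = (\<integral>\<^sup>+ x. ennreal (c^2 / s powr e) * (ennreal (s ^ CARD('n)) * (\<integral>\<^sup>+ y. F ((1/s) *\<^sub>R x) y \<partial>lborel)) \<partial>lborel)"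
    by (intro nn_integral_cong) (simp add: nn_integral_cmult nn_scale[OF _ s])
  also have "\<dots> = ennreal (c^2 / s powr e) * (ennreal (s ^ CARD('n)) * (ennreal (s ^ CARD('n)) * gagliardo \<alpha> \<phi>))"
  proof -
    have "(\<integral>\<^sup>+x. (\<integral>\<^sup>+ y. F ((1/s) *\<^sub>R x) y \<partial>lborel) \<partial>lborel) = ennreal(s^CARD('n)) * (\<integral>\<^sup>+x. \<integral>\<^sup>+ y. F x y \<partial>lborel \<partial>lborel)"
      by (rule nn_scale[OF H s])
    moreover have "gagliardo \<alpha> \<phi> = (\<integral>\<^sup>+x. \<integral>\<^sup>+ y. F x y \<partial>lborel \<partial>lborel)"
      unfolding gagliardo_def F_def e_def ..
    ultimately show ?thesis by (simp add: nn_integral_cmult)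
  qed
  also have "\<dots> = ennreal (c^2 * s powr (real CARD('n) - 2 * \<alpha>)) * gagliardo \<alpha> \<phi>"
  proof -
    have "c^2 / s powr e * (s ^ CARD('n) * s ^ CARD('n)) = c^2 * s powr (real CARD('n) - 2 * \<alpha>)"
    proof -
      have 1: "s ^ CARD('n) = s powr real CARD('n)" using s by (simp add: powr_realpow)
      have 2: "s powr e = s powr real CARD('n) * s powr (2 * \<alpha>)" unfolding e_def by (simp add: powr_add)
      have 3: "s powr (real CARD('n) - 2 * \<alpha>) = s powr real CARD('n) / s powr (2 * \<alpha>)" by (simp add: powr_diff)
      show ?thesis unfolding 1 2 3 using s by (simp add: field_simps)
    qed
    then show ?thesis using s c by (simp add: ennreal_mult[symmetric] mult.assoc[symmetric])
  qed
  finally show ?thesis .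
qed

definition Pw :: "real \<Rightarrow> real \<Rightarrow> (real^'n::finite \<Rightarrow> complex) \<Rightarrow> real" where
  "Pw \<gamma> p \<phi> = integral\<^sup>L lborel (\<lambda>x. norm x powr \<gamma> * cmod (\<phi> x) powr (p + 1))"

lemma Pw_G:
  fixes \<phi> :: "real^'n::finite \<Rightarrow> complex"
  assumes [measurable]: "\<phi> \<in> borel_measurable borel" and s: "s > 0" and c: "c > 0"
  shows "Pw \<gamma> p (G c s \<phi>) = c powr (p+1) * s powr (real CARD('n) + \<gamma>) * Pw \<gamma> p \<phi>"
proof -
  have pt: "norm x powr \<gamma> * cmod (G c s \<phi> x) powr (p + 1) = 
     (c powr (p+1) * s powr \<gamma>) * (norm ((1/s) *\<^sub>R x) powr \<gamma> * cmod (\<phi> ((1/s) *\<^sub>R x)) powr (p + 1))" for x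
  proof -
    have "norm x = s * norm ((1/s) *\<^sub>R x)" using s by simp
    then show ?thesis unfolding G_def using s c by (simp add: norm_mult powr_mult powr_divide)
  qed
  have [measurable]: "(\<lambda>x. norm x powr \<gamma> * cmod (\<phi> x) powr (p + 1)) \<in> borel_measurable borel" by measurable
  have "Pw \<gamma> p (G c s \<phi>) = (c powr (p+1) * s powr \<gamma>) * integral\<^sup>L lborel (\<lambda>x. norm ((1/s) *\<^sub>R x) powr \<gamma> * cmod (\<phi> ((1/s) *\<^sub>R x)) powr (p + 1))"
    unfolding Pw_def pt by simp
  also have "\<dots> = (c powr (p+1) * s powr \<gamma>) * (s ^ CARD('n) * Pw \<gamma> p \<phi>)"
    unfolding Pw_def by (subst int_scale[OF _ s]) auto
  finally show ?thesis using s by (simp add: powr_add powr_realpow)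
qed

lemma null_scale:
  fixes N :: "(real^'n::finite) set"
  assumes "N \<in> null_sets lborel" and s: "s > 0"
  shows "(\<lambda>x. (1/s) *\<^sub>R x) -` N \<in> null_sets lborel"
proof -
  have [measurable]: "N \<in> sets borel" using assms(1) by (simp add: null_sets_def)
  have mf: "(\<lambda>x::real^'n. (1/s) *\<^sub>R x) \<in> borel_measurable borel" by measurable
  have m: "(\<lambda>x. (1/s) *\<^sub>R x) -` N \<in> sets borel" using measurable_sets[OF mf, of N] by simp
  have "emeasure lborel ((\<lambda>x. (1/s) *\<^sub>R x) -` N) = (\<integral>\<^sup>+x. indicator N ((1/s) *\<^sub>R x) \<partial>lborel)"
    using m by (simp add: nn_integral_indicator[symmetric] indicator_def del: nn_integral_indicator)
  also have "\<dots> = ennreal (s ^ CARD('n)) * (\<integral>\<^sup>+x. indicator N x \<partial>lborel)"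
    by (rule nn_scale[OF _ s]) measurable
  also have "\<dots> = 0" using assms(1) by (simp add: null_sets_def)
  finally show ?thesis using m by (simp add: null_sets_def)
qed

lemma Hrd_G:
  fixes \<phi> :: "real^'n::finite \<Rightarrow> complex"
  assumes h: "\<phi> \<in> Hrd \<alpha>" and s: "s > 0" and c: "c > 0"
  shows "G c s \<phi> \<in> Hrd \<alpha>"
proof -
  have m[measurable]: "\<phi> \<in> borel_measurable borel" using h by (simp add: Hrd_def Hs_def)
  have "G c s \<phi> \<in> borel_measurable borel" unfolding G_def by measurable
  moreover have "L2sq (G c s \<phi>) < \<infinity>" using h s c by (simp add: L2sq_G Hrd_def Hs_def ennreal_mult_less_top)
  moreover have "gagliardo \<alpha> (G c s \<phi>) < \<infinity>" using h s c by (simp add: gag_G Hrd_def Hs_def ennreal_mult_less_top)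
  moreover have "radial (G c s \<phi>)"
  proof -
    obtain g where "AE x in lborel. \<phi> x = g (norm x)" using h by (auto simp: Hrd_def radial_def)
    then obtain N where N0: "{x \<in> space lborel. \<not> \<phi> x = g (norm x)} \<subseteq> N" "emeasure lborel N = 0" "N \<in> sets lborel"
      by (rule AE_E)
    then have N: "{x \<in> space lborel. \<not> \<phi> x = g (norm x)} \<subseteq> N" "N \<in> null_sets lborel"
      by (auto simp: null_sets_def)
    have "AE x in lborel. G c s \<phi> x = complex_of_real c * g (norm x / s)"
    proof (rule AE_I')
      show "(\<lambda>x. (1/s) *\<^sub>R x) -` N \<in> null_sets lborel" by (rule null_scale[OF N(2) s])
      show "{x \<in> space lborel. \<not> G c s \<phi> x = complex_of_real c * g (norm x / s)} \<subseteq> (\<lambda>x. (1/s) *\<^sub>R x) -` N"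
      proof
        fix x assume "x \<in> {x \<in> space lborel. \<not> G c s \<phi> x = complex_of_real c * g (norm x / s)}"
        then have "\<phi> ((1/s) *\<^sub>R x) \<noteq> g (norm ((1/s) *\<^sub>R x))" using s c by (auto simp: G_def)
        then show "x \<in> (\<lambda>x. (1/s) *\<^sub>R x) -` N" using N(1) by auto
      qed
    qed
    then show ?thesis unfolding radial_def by (intro exI[of _ "\<lambda>r. complex_of_real c * g (r / s)"])
  qed
  ultimately show ?thesis by (simp add: Hrd_def Hs_def)
qed

definition T1 :: "(real^'n::finite \<Rightarrow> complex) \<Rightarrow> real" where "T1 \<phi> = enn2real (L2sq \<phi>)"

lemma powr_pow': "l > 0 \<Longrightarrow> (l powr a) ^ n = l powr (real n * a)"
  by (simp add: powr_realpow[symmetric] powr_powr mult.commute)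

lemma scaling_G: "scaling a b l \<phi> = G (l powr a) (l powr b) \<phi>"
  unfolding scaling_def G_def ..

lemma T_scaling:
  fixes \<phi> :: "real^'n::finite \<Rightarrow> complex"
  assumes [measurable]: "\<phi> \<in> borel_measurable borel" and l: "l > 0"
  shows "T1 (scaling a b l \<phi>) = l powr (2*a + real CARD('n) * b) * T1 \<phi>"
    and "frac_grad_sq \<alpha> (scaling a b l \<phi>) = l powr (2*a + (real CARD('n) - 2*\<alpha>) * b) * frac_grad_sq \<alpha> \<phi>"
    and "Pw \<gamma> p (scaling a b l \<phi>) = l powr ((p+1)*a + (real CARD('n) + \<gamma>) * b) * Pw \<gamma> p \<phi>"
proof -
  have c: "l powr a > 0" "l powr b > 0" using l by auto
  show "T1 (scaling a b l \<phi>) = l powr (2*a + real CARD('n) * b) * T1 \<phi>"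
    unfolding T1_def scaling_G L2sq_G[OF assms(1) c(2) c(1)] using l
    by (simp add: enn2real_mult powr_pow' powr_add)
  show "frac_grad_sq \<alpha> (scaling a b l \<phi>) = l powr (2*a + (real CARD('n) - 2*\<alpha>) * b) * frac_grad_sq \<alpha> \<phi>"
    unfolding frac_grad_sq_def scaling_G gag_G[OF assms(1) c(2) c(1)] using l
    by (simp add: enn2real_mult powr_pow' powr_add powr_powr mult.commute mult.left_commute)
  show "Pw \<gamma> p (scaling a b l \<phi>) = l powr ((p+1)*a + (real CARD('n) + \<gamma>) * b) * Pw \<gamma> p \<phi>"
    unfolding scaling_G Pw_G[OF assms(1) c(2) c(1)] using l
    by (simp add: powr_powr powr_add[symmetric] algebra_simps)
qed

lemma action_eq: "action \<alpha> \<gamma> p \<phi> = 1/2 * (T1 \<phi> + frac_grad_sq \<alpha> \<phi>) - 1/(p+1) * Pw \<gamma> p \<phi>"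
  unfolding action_def T1_def Hnorm_sq_def Pw_def ..

lemma Kfun_eq:
  fixes \<phi> :: "real^'n::finite \<Rightarrow> complex"
  assumes [measurable]: "\<phi> \<in> borel_measurable borel" and pp: "p + 1 \<noteq> 0"
  shows "Kfun \<alpha> \<gamma> p a b \<phi> = 1/2 * ((2*a + real CARD('n) * b) * T1 \<phi>
      + (2*a + (real CARD('n) - 2*\<alpha>) * b) * frac_grad_sq \<alpha> \<phi>)
      - ((p+1)*a + (real CARD('n) + \<gamma>) * b) / (p+1) * Pw \<gamma> p \<phi>"
proof -
  define e1 where "e1 = 2*a + real CARD('n) * b"
  define e2 where "e2 = 2*a + (real CARD('n) - 2*\<alpha>) * b"
  define e3 where "e3 = (p+1)*a + (real CARD('n) + \<gamma>) * b"
  define f where "f = (\<lambda>l::real. 1/2 * (l powr e1 * T1 \<phi> + l powr e2 * frac_grad_sq \<alpha> \<phi>) - 1/(p+1) * (l powr e3 * Pw \<gamma> p \<phi>))"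
  have ev: "eventually (\<lambda>l. action \<alpha> \<gamma> p (scaling a b l \<phi>) = f l) (nhds 1)"
  proof -
    have "eventually (\<lambda>l::real. l \<in> {0<..}) (nhds 1)"
      by (rule eventually_nhds_in_open) auto
    then show ?thesis
      by eventually_elim (simp add: action_eq T_scaling f_def e1_def e2_def e3_def)
  qed
  have "(f has_real_derivative (1/2 * (e1 * T1 \<phi> + e2 * frac_grad_sq \<alpha> \<phi>) - 1/(p+1) * (e3 * Pw \<gamma> p \<phi>))) (at 1)"
    unfolding f_def using pp by (auto intro!: derivative_eq_intros)
  then have "((\<lambda>l. action \<alpha> \<gamma> p (scaling a b l \<phi>)) has_real_derivative (1/2 * (e1 * T1 \<phi> + e2 * frac_grad_sq \<alpha> \<phi>) - 1/(p+1) * (e3 * Pw \<gamma> p \<phi>))) (at 1)"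
    using DERIV_cong_ev[OF refl ev refl] pp by simp
  then show ?thesis unfolding Kfun_def e1_def e2_def e3_def
    by (subst DERIV_imp_deriv) (auto simp: pp)
qed

lemma bern: fixes x r :: real assumes "x > 0" "0 \<le> r" "r \<le> 1" shows "x powr r \<le> 1 + r * (x - 1)"
  using Youngs_inequality_0[of r "1 - r" x 1] assms by (simp add: algebra_simps)

lemma mono_up:
  fixes l t1 t2 Q e1 e2 e3 :: real
  assumes l: "l \<ge> 1" and t: "t1 \<ge> 0" "t2 \<ge> 0" and e: "0 < e1" "e1 \<le> e3" "0 < e2" "e2 \<le> e3"
    and K: "1/2 * (e1 * t1 + e2 * t2) \<le> e3 * Q"
  shows "1/2 * (l powr e1 * t1 + l powr e2 * t2) - l powr e3 * Q \<le> 1/2 * (t1 + t2) - Q"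
proof -
  define x where "x = l powr e3"
  have x: "x \<ge> 1" unfolding x_def using l e by (simp add: ge_one_powr_ge_zero)
  have e3: "e3 > 0" using e by simp
  have 1: "l powr e1 = x powr (e1/e3)" "l powr e2 = x powr (e2/e3)" unfolding x_def using l e3
    by (simp_all add: powr_powr)
  have b1: "x powr (e1/e3) \<le> 1 + (e1/e3) * (x - 1)" by (rule bern) (use x e in auto)
  have b2: "x powr (e2/e3) \<le> 1 + (e2/e3) * (x - 1)" by (rule bern) (use x e in auto)
  have "1/2 * (l powr e1 * t1 + l powr e2 * t2) \<le> 1/2 * ((1 + (e1/e3) * (x - 1)) * t1 + (1 + (e2/e3) * (x - 1)) * t2)"
    unfolding 1 using b1 b2 t by (intro mult_left_mono add_mono mult_right_mono) auto
  also have "\<dots> = 1/2 * (t1 + t2) + (1/2 * (e1 * t1 + e2 * t2)) / e3 * (x - 1)"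
    using e3 by (simp add: field_simps)
  also have "\<dots> \<le> 1/2 * (t1 + t2) + Q * (x - 1)"
    using K e3 x by (intro add_left_mono mult_right_mono) (auto simp: divide_le_eq mult.commute)
  finally have F: "1/2 * (l powr e1 * t1 + l powr e2 * t2) \<le> 1/2 * (t1 + t2) + Q * (x - 1)" .
  have "Q * (x - 1) = l powr e3 * Q - Q" unfolding x_def by algebra
  then show ?thesis using F by linarith
qed

lemma mono_down:
  fixes l t1 t2 Q e1 e2 e3 :: real
  assumes l: "0 < l" "l \<le> 1" and t: "t1 \<ge> 0" "t2 \<ge> 0" and e: "0 < e1" "e1 \<le> e3" "0 < e2" "e2 \<le> e3"
    and K: "1/2 * (e1 * t1 + e2 * t2) \<ge> e3 * Q"
  shows "1/2 * (l powr e1 * t1 + l powr e2 * t2) - l powr e3 * Q \<le> 1/2 * (t1 + t2) - Q"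
proof -
  define x where "x = l powr e3"
  have e3: "e3 > 0" using e by simp
  have x: "x \<le> 1" "x > 0" unfolding x_def using l e3 by (auto simp: powr_le1)
  have 1: "l powr e1 = x powr (e1/e3)" "l powr e2 = x powr (e2/e3)" unfolding x_def using l e3
    by (simp_all add: powr_powr)
  have b1: "x powr (e1/e3) \<le> 1 + (e1/e3) * (x - 1)" by (rule bern) (use x e in auto)
  have b2: "x powr (e2/e3) \<le> 1 + (e2/e3) * (x - 1)" by (rule bern) (use x e in auto)
  have "1/2 * (l powr e1 * t1 + l powr e2 * t2) \<le> 1/2 * ((1 + (e1/e3) * (x - 1)) * t1 + (1 + (e2/e3) * (x - 1)) * t2)"
    unfolding 1 using b1 b2 t by (intro mult_left_mono add_mono mult_right_mono) auto
  also have "\<dots> = 1/2 * (t1 + t2) + (1/2 * (e1 * t1 + e2 * t2)) / e3 * (x - 1)"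
    using e3 by (simp add: field_simps)
  also have "\<dots> \<le> 1/2 * (t1 + t2) + Q * (x - 1)"
  proof -
    have "Q \<le> (1/2 * (e1 * t1 + e2 * t2)) / e3" using K e3 by (simp add: le_divide_eq mult.commute)
    then show ?thesis using x by (intro add_left_mono mult_right_mono_neg) auto
  qed
  finally have F: "1/2 * (l powr e1 * t1 + l powr e2 * t2) \<le> 1/2 * (t1 + t2) + Q * (x - 1)" .
  have "Q * (x - 1) = l powr e3 * Q - Q" unfolding x_def by algebra
  then show ?thesis using F by linarith
qed

lemma ev_neg:
  fixes t1 t2 Q c1 c2 c3 e1 e2 e3 :: real
  assumes Q: "Q > 0" and e: "e1 < e3" "e2 < e3" and c3: "c3 > 0"
  shows "\<exists>L\<ge>1. 1/2 * (c1 * L powr e1 * t1 + c2 * L powr e2 * t2) - c3 * L powr e3 * Q \<le> 0"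
proof -
  have "((\<lambda>l. 1/2 * (c1 * l powr (e1 - e3) * t1 + c2 * l powr (e2 - e3) * t2) - c3 * Q) \<longlongrightarrow>
        1/2 * (c1 * 0 * t1 + c2 * 0 * t2) - c3 * Q) at_top"
    using e by (intro tendsto_intros tendsto_neg_powr filterlim_ident) auto
  then have "eventually (\<lambda>l. 1/2 * (c1 * l powr (e1 - e3) * t1 + c2 * l powr (e2 - e3) * t2) - c3 * Q < 0) at_top"
    using Q c3 by (intro order_tendstoD) auto
  moreover have "eventually (\<lambda>l::real. l \<ge> 1) at_top" by (rule eventually_ge_at_top)
  ultimately have "eventually (\<lambda>l. l \<ge> 1 \<and> 1/2 * (c1 * l powr (e1 - e3) * t1 + c2 * l powr (e2 - e3) * t2) - c3 * Q < 0) at_top"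
    by eventually_elim auto
  then obtain L where L: "L \<ge> 1" "1/2 * (c1 * L powr (e1 - e3) * t1 + c2 * L powr (e2 - e3) * t2) - c3 * Q < 0"
    by (auto simp: eventually_at_top_linorder)
  have "1/2 * (c1 * L powr e1 * t1 + c2 * L powr e2 * t2) - c3 * L powr e3 * Q
      = L powr e3 * (1/2 * (c1 * L powr (e1 - e3) * t1 + c2 * L powr (e2 - e3) * t2) - c3 * Q)"
    using L(1) by (simp add: powr_diff field_simps)
  also have "\<dots> \<le> 0" using L by (intro mult_nonneg_nonpos) auto
  finally show ?thesis using L(1) by blast
qed

lemma ev_pos:
  fixes t1 t2 Q c1 c2 c3 e1 e2 e3 :: real
  assumes t: "t1 > 0" "t2 \<ge> 0" and c: "c1 > 0" "c2 \<ge> 0" and e: "e1 < e3"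
  shows "\<exists>l>0. l \<le> 1 \<and> 1/2 * (c1 * l powr e1 * t1 + c2 * l powr e2 * t2) - c3 * l powr e3 * Q \<ge> 0"
proof -
  have "((\<lambda>l. 1/2 * c1 * t1 - c3 * Q * l powr (e3 - e1)) \<longlongrightarrow> 1/2 * c1 * t1 - c3 * Q * 0) (at_right 0)"
    using e by (intro tendsto_intros tendsto_zero_powrI) (auto simp: eventually_at_right_less eventually_at_filter)
  then have lim: "((\<lambda>l. 1/2 * c1 * t1 - c3 * Q * l powr (e3 - e1)) \<longlongrightarrow> 1/2 * c1 * t1) (at_right 0)" by simp
  have "eventually (\<lambda>l. 1/2 * c1 * t1 - c3 * Q * l powr (e3 - e1) > 0) (at_right 0)"
    using order_tendstoD(1)[OF lim, of 0] t c by simp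
  then obtain b where b: "b > 0" "\<And>y. 0 < y \<Longrightarrow> y < b \<Longrightarrow> 1/2 * c1 * t1 - c3 * Q * y powr (e3 - e1) > 0"
    by (auto simp: eventually_at_right_field)
  define l where "l = min (b/2) 1"
  have l: "0 < l" "l < b" "l \<le> 1" unfolding l_def using b by auto
  have "0 \<le> l powr e1 * (1/2 * c1 * t1 - c3 * Q * l powr (e3 - e1))"
    using b(2)[OF l(1,2)] by simp
  also have "\<dots> = 1/2 * (c1 * l powr e1 * t1) - c3 * l powr e3 * Q"
    using l by (simp add: powr_diff field_simps)
  also have "\<dots> \<le> 1/2 * (c1 * l powr e1 * t1 + c2 * l powr e2 * t2) - c3 * l powr e3 * Q"
    using t c by simp
  finally show ?thesis using l by blast
qed

lemma Hrd_meas: "\<phi> \<in> Hrd \<alpha> \<Longrightarrow> \<phi> \<in> borel_measurable borel"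
  by (simp add: Hrd_def Hs_def)

lemma scaling1: "scaling a b 1 \<phi> = \<phi>"
  unfolding scaling_def by simp

lemma frac_const_nonneg: "frac_const \<alpha> TYPE('n::finite) \<ge> 0"
  unfolding frac_const_def
  by (intro inverse_nonnegative_iff_nonnegative[THEN iffD2] integral_nonneg divide_nonneg_nonneg) auto

lemma T2_nonneg: "frac_grad_sq \<alpha> (\<phi> :: real^'n::finite \<Rightarrow> complex) \<ge> 0"
  unfolding frac_grad_sq_def using frac_const_nonneg[where 'n='n] by simp

lemma T1_nonneg: "T1 \<phi> \<ge> 0" unfolding T1_def by simp

lemma Pw_nonneg: "Pw \<gamma> p \<phi> \<ge> 0" unfolding Pw_def by (intro integral_nonneg_AE) auto

lemma Pw_zero: "AE x in lborel. \<phi> x = 0 \<Longrightarrow> Pw \<gamma> p \<phi> = 0"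
  unfolding Pw_def by (rule integral_eq_zero_AE) (auto elim!: AE_mp)

lemma T1_pos:
  assumes h: "\<phi> \<in> Hrd \<alpha>" and nz: "\<not> (AE x in lborel. \<phi> x = 0)"
  shows "T1 \<phi> > 0"
proof -
  have [measurable]: "\<phi> \<in> borel_measurable borel" using h by (rule Hrd_meas)
  have fin: "L2sq \<phi> < \<infinity>" using h by (simp add: Hrd_def Hs_def)
  have "L2sq \<phi> \<noteq> 0"
  proof
    assume "L2sq \<phi> = 0"
    then have "AE x in lborel. ennreal ((cmod (\<phi> x))\<^sup>2) = 0"
      unfolding L2sq_def by (subst (asm) nn_integral_0_iff_AE) auto
    then have "AE x in lborel. \<phi> x = 0" by (auto elim!: AE_mp)
    with nz show False by simp
  qed
  then show ?thesis unfolding T1_def using fin by (simp add: enn2real_positive_iff top.not_eq_extremum zero_less_iff_neq_zero)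
qed

lemma key:
  fixes \<phi> :: "real^'n::finite \<Rightarrow> complex"
  assumes h: "\<phi> \<in> Hrd \<alpha>" and P: "Pw \<gamma> p \<phi> > 0" and l: "0 < l1" "l1 \<le> l2" and pp: "p + 1 \<noteq> 0"
    and k1: "Kfun \<alpha> \<gamma> p a b (scaling a' b' l1 \<phi>) \<ge> 0"
    and k2: "Kfun \<alpha> \<gamma> p a b (scaling a' b' l2 \<phi>) \<le> 0"
  shows "\<exists>l. l1 \<le> l \<and> l \<le> l2 \<and> mval \<alpha> \<gamma> p a b TYPE('n) \<le> ereal (action \<alpha> \<gamma> p (scaling a' b' l \<phi>))"
proof -
  have [measurable]: "\<phi> \<in> borel_measurable borel" using h by (rule Hrd_meas)
  define k where "k = (\<lambda>l. Kfun \<alpha> \<gamma> p a b (scaling a' b' l \<phi>))"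
  have keq: "k l = 1/2 * ((2*a + real CARD('n) * b) * (l powr (2*a' + real CARD('n) * b') * T1 \<phi>)
      + (2*a + (real CARD('n) - 2*\<alpha>) * b) * (l powr (2*a' + (real CARD('n) - 2*\<alpha>) * b') * frac_grad_sq \<alpha> \<phi>))
      - ((p+1)*a + (real CARD('n) + \<gamma>) * b) / (p+1) * (l powr ((p+1)*a' + (real CARD('n) + \<gamma>) * b') * Pw \<gamma> p \<phi>)"
    if "l > 0" for l
  proof -
    have [measurable]: "scaling a' b' l \<phi> \<in> borel_measurable borel" unfolding scaling_def by measurable
    show ?thesis unfolding k_def by (simp add: Kfun_eq[OF _ pp] T_scaling that)
  qed
  have "continuous_on {l1..l2} k"
  proof (rule continuous_on_cong[THEN iffD2])
    show "{l1..l2} = {l1..l2}" ..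
    show "\<And>x. x \<in> {l1..l2} \<Longrightarrow> k x = (\<lambda>l. 1/2 * ((2*a + real CARD('n) * b) * (l powr (2*a' + real CARD('n) * b') * T1 \<phi>)
      + (2*a + (real CARD('n) - 2*\<alpha>) * b) * (l powr (2*a' + (real CARD('n) - 2*\<alpha>) * b') * frac_grad_sq \<alpha> \<phi>))
      - ((p+1)*a + (real CARD('n) + \<gamma>) * b) / (p+1) * (l powr ((p+1)*a' + (real CARD('n) + \<gamma>) * b') * Pw \<gamma> p \<phi>)) x"
      using l by (intro keq) auto
    show "continuous_on {l1..l2} (\<lambda>l. 1/2 * ((2*a + real CARD('n) * b) * (l powr (2*a' + real CARD('n) * b') * T1 \<phi>)
      + (2*a + (real CARD('n) - 2*\<alpha>) * b) * (l powr (2*a' + (real CARD('n) - 2*\<alpha>) * b') * frac_grad_sq \<alpha> \<phi>))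
      - ((p+1)*a + (real CARD('n) + \<gamma>) * b) / (p+1) * (l powr ((p+1)*a' + (real CARD('n) + \<gamma>) * b') * Pw \<gamma> p \<phi>))"
      using l by (intro continuous_intros) auto
  qed
  then obtain l where lr: "l1 \<le> l" "l \<le> l2" "k l = 0"
    using IVT2'[of k l2 0 l1] k1 k2 l unfolding k_def by auto
  define \<psi> where "\<psi> = scaling a' b' l \<phi>"
  have lpos: "l > 0" using lr l by auto
  have "\<psi> \<in> Hrd \<alpha>" unfolding \<psi>_def scaling_G using h lpos by (intro Hrd_G) auto
  moreover have "Pw \<gamma> p \<psi> > 0" unfolding \<psi>_def using P lpos by (simp add: T_scaling)
  then have "\<not> (AE x in lborel. \<psi> x = 0)" using Pw_zero[of \<psi> \<gamma> p] by auto
  moreover have "Kfun \<alpha> \<gamma> p a b \<psi> = 0" using lr unfolding k_def \<psi>_def by simp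
  ultimately have "mval \<alpha> \<gamma> p a b TYPE('n) \<le> ereal (action \<alpha> \<gamma> p \<psi>)"
    unfolding mval_def by (intro Inf_lower imageI) auto
  then show ?thesis using lr unfolding \<psi>_def by blast
qed

lemma line_action:
  fixes \<psi> :: "real^'n::finite \<Rightarrow> complex"
  assumes [measurable]: "\<psi> \<in> borel_measurable borel" and l: "l > 0"
  shows "action \<alpha> \<gamma> p (scaling a' b' l \<psi>) = 1/2 * (l powr (2*a' + real CARD('n) * b') * T1 \<psi>
      + l powr (2*a' + (real CARD('n) - 2*\<alpha>) * b') * frac_grad_sq \<alpha> \<psi>)
      - l powr ((p+1)*a' + (real CARD('n) + \<gamma>) * b') * (Pw \<gamma> p \<psi> / (p+1))"
  by (simp add: action_eq T_scaling l)

lemma line_K: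
  fixes \<psi> :: "real^'n::finite \<Rightarrow> complex"
  assumes [measurable]: "\<psi> \<in> borel_measurable borel" and l: "l > 0" and pp: "p + 1 \<noteq> 0"
  shows "Kfun \<alpha> \<gamma> p a b (scaling a' b' l \<psi>) = 1/2 * ((2*a + real CARD('n) * b) * l powr (2*a' + real CARD('n) * b') * T1 \<psi>
      + (2*a + (real CARD('n) - 2*\<alpha>) * b) * l powr (2*a' + (real CARD('n) - 2*\<alpha>) * b') * frac_grad_sq \<alpha> \<psi>)
      - ((p+1)*a + (real CARD('n) + \<gamma>) * b) / (p+1) * l powr ((p+1)*a' + (real CARD('n) + \<gamma>) * b') * Pw \<gamma> p \<psi>"
proof -
  have [measurable]: "scaling a' b' l \<psi> \<in> borel_measurable borel" unfolding scaling_def by measurable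
  show ?thesis by (simp add: Kfun_eq[OF _ pp] T_scaling l mult.assoc)
qed

lemma m_le:
  assumes p: "p > 1" and al: "0 < \<alpha>" "\<alpha> < 1" and N: "CARD('n::finite) \<ge> 2" and g: "\<gamma> \<ge> 0"
    and ab: "a > 0" "b \<ge> 0" "a' > 0" "b' \<ge> 0"
  shows "mval \<alpha> \<gamma> p a b TYPE('n) \<le> mval \<alpha> \<gamma> p a' b' TYPE('n)"
proof -
  define N where "N = real CARD('n)"
  have N2: "N \<ge> 2" using N unfolding N_def by simp
  have pp: "p + 1 \<noteq> 0" "p + 1 > 0" using p by auto
  define E1 where "E1 = 2*a + N * b"
  define E2 where "E2 = 2*a + (N - 2*\<alpha>) * b"
  define E3 where "E3 = (p+1)*a + (N + \<gamma>) * b"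
  define F1 where "F1 = 2*a' + N * b'"
  define F2 where "F2 = 2*a' + (N - 2*\<alpha>) * b'"
  define F3 where "F3 = (p+1)*a' + (N + \<gamma>) * b'"
  have Epos: "E1 > 0" "E2 > 0" "E3 > 0" using ab al N2 p g unfolding E1_def E2_def E3_def
    by (auto intro!: add_pos_nonneg mult_nonneg_nonneg)
  have Fpos: "F1 > 0" "F2 > 0" "F3 > 0" using ab al N2 p g unfolding F1_def F2_def F3_def
    by (auto intro!: add_pos_nonneg mult_nonneg_nonneg)
  have Flt: "F1 < F3" "F2 < F3"
  proof -
    have "(p - 1) * a' > 0" using p ab by simp
    moreover have "\<gamma> * b' \<ge> 0" "(\<gamma> + 2*\<alpha>) * b' \<ge> 0" using g al ab by auto
    ultimately show "F1 < F3" "F2 < F3" unfolding F1_def F3_def F2_def by (auto simp: algebra_simps)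
  qed
  have "mval \<alpha> \<gamma> p a b TYPE('n) \<le> ereal (action \<alpha> \<gamma> p \<psi>)"
    if \<psi>: "\<psi> \<in> Hrd \<alpha>" "\<not> (AE x in lborel. \<psi> x = 0)" "Kfun \<alpha> \<gamma> p a' b' \<psi> = 0" for \<psi> :: "real^'n \<Rightarrow> complex"
  proof -
    have hm[measurable]: "\<psi> \<in> borel_measurable borel" using \<psi>(1) by (rule Hrd_meas)
    define t1 where "t1 = T1 \<psi>"
    define t2 where "t2 = frac_grad_sq \<alpha> \<psi>"
    define P where "P = Pw \<gamma> p \<psi>"
    have t: "t1 > 0" "t2 \<ge> 0" "P \<ge> 0" unfolding t1_def t2_def P_def
      using T1_pos[OF \<psi>(1,2)] T2_nonneg Pw_nonneg by auto
    have K': "1/2 * (F1 * t1 + F2 * t2) = F3 / (p+1) * P"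
      using \<psi>(3) unfolding Kfun_eq[OF hm pp(1)] F1_def F2_def F3_def N_def t1_def t2_def P_def by simp
    have "1/2 * (F1 * t1 + F2 * t2) > 0" using t Fpos by (simp add: add_pos_nonneg)
    then have Ppos: "P > 0" using K' t(3) by (cases "P = 0") auto
    have K'': "1/2 * (F1 * t1 + F2 * t2) = F3 * (P / (p+1))" using K' by simp
    have act: "action \<alpha> \<gamma> p (scaling a' b' l \<psi>) = 1/2 * (l powr F1 * t1 + l powr F2 * t2) - l powr F3 * (P/(p+1))"
      if "l > 0" for l
      unfolding line_action[OF hm that] F1_def F2_def F3_def t1_def t2_def P_def N_def by simp
    have kk: "Kfun \<alpha> \<gamma> p a b (scaling a' b' l \<psi>) = 1/2 * (E1 * l powr F1 * t1 + E2 * l powr F2 * t2) - E3/(p+1) * l powr F3 * P"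
      if "l > 0" for l
      unfolding line_K[OF hm that pp(1)] E1_def E2_def E3_def F1_def F2_def F3_def t1_def t2_def P_def N_def by simp
    have a1: "action \<alpha> \<gamma> p \<psi> = 1/2 * (t1 + t2) - P/(p+1)"
      using act[of 1] by (simp add: scaling1)
    show ?thesis
    proof (cases "Kfun \<alpha> \<gamma> p a b \<psi> \<ge> 0")
      case True
      obtain L where L: "L \<ge> 1" "1/2 * (E1 * L powr F1 * t1 + E2 * L powr F2 * t2) - E3/(p+1) * L powr F3 * P \<le> 0"
        using ev_neg[OF Ppos Flt, of "E3/(p+1)" E1 t1 E2 t2] Epos pp by auto
      have kL: "Kfun \<alpha> \<gamma> p a b (scaling a' b' L \<psi>) \<le> 0" using L kk[of L] by simp
      have k1: "Kfun \<alpha> \<gamma> p a b (scaling a' b' 1 \<psi>) \<ge> 0" using True by (simp add: scaling1)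
      have PP: "Pw \<gamma> p \<psi> > 0" using Ppos unfolding P_def .
      obtain l where l: "1 \<le> l" "l \<le> L" "mval \<alpha> \<gamma> p a b TYPE('n) \<le> ereal (action \<alpha> \<gamma> p (scaling a' b' l \<psi>))"
        using key[OF \<psi>(1) PP _ L(1) pp(1) k1 kL] by auto
      have "action \<alpha> \<gamma> p (scaling a' b' l \<psi>) \<le> action \<alpha> \<gamma> p \<psi>"
        unfolding act[of l, OF order_less_le_trans[OF zero_less_one l(1)]] a1 using l(1) t Fpos Flt K'' by (intro mono_up) auto
      with l(3) show ?thesis by (meson ereal_less_eq(3) order_trans)
    next
      case False
      obtain l0 where l0: "l0 > 0" "l0 \<le> 1" "1/2 * (E1 * l0 powr F1 * t1 + E2 * l0 powr F2 * t2) - E3/(p+1) * l0 powr F3 * P \<ge> 0"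
        using ev_pos[where ?c2.0=E2 and ?c3.0="E3/(p+1)" and Q=P and ?e2.0=F2, OF t(1) t(2) Epos(1) _ Flt(1)] Epos by auto
      have k1: "Kfun \<alpha> \<gamma> p a b (scaling a' b' 1 \<psi>) \<le> 0" using False by (simp add: scaling1)
      have kL: "Kfun \<alpha> \<gamma> p a b (scaling a' b' l0 \<psi>) \<ge> 0" using l0 kk[OF l0(1)] by simp
      have PP: "Pw \<gamma> p \<psi> > 0" using Ppos unfolding P_def .
      obtain l where l: "l0 \<le> l" "l \<le> 1" "mval \<alpha> \<gamma> p a b TYPE('n) \<le> ereal (action \<alpha> \<gamma> p (scaling a' b' l \<psi>))"
        using key[OF \<psi>(1) PP l0(1) l0(2) pp(1) kL k1] by auto
      have "action \<alpha> \<gamma> p (scaling a' b' l \<psi>) \<le> action \<alpha> \<gamma> p \<psi>"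
        unfolding act[of l, OF order_less_le_trans[OF l0(1) l(1)]] a1 using l l0 t Fpos Flt K'' by (intro mono_down) auto
      with l(3) show ?thesis by (meson ereal_less_eq(3) order_trans)
    qed
  qed
  then show ?thesis unfolding mval_def[of \<alpha> \<gamma> p a' b'] by (intro Inf_greatest) auto
qed

lemma A_sub:
  assumes p: "p > 1" and al: "0 < \<alpha>" "\<alpha> < 1" and N: "CARD('n::finite) \<ge> 2" and g: "\<gamma> \<ge> 0"
    and ab: "a > 0" "b \<ge> 0" "a' > 0" "b' \<ge> 0"
    and meq: "mval \<alpha> \<gamma> p a b TYPE('n) = mval \<alpha> \<gamma> p a' b' TYPE('n)"
  shows "(Aset \<alpha> \<gamma> p a b :: (real^'n \<Rightarrow> complex) set) \<subseteq> Aset \<alpha> \<gamma> p a' b'"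
proof
  fix \<psi> :: "real^'n \<Rightarrow> complex"
  assume A: "\<psi> \<in> Aset \<alpha> \<gamma> p a b"
  then have \<psi>: "\<psi> \<in> Hrd \<alpha>" "ereal (action \<alpha> \<gamma> p \<psi>) < mval \<alpha> \<gamma> p a b TYPE('n)" "Kfun \<alpha> \<gamma> p a b \<psi> > 0"
    by (auto simp: Aset_def)
  define N where "N = real CARD('n)"
  have N2: "N \<ge> 2" using N unfolding N_def by simp
  have pp: "p + 1 \<noteq> 0" "p + 1 > 0" using p by auto
  define E1 where "E1 = 2*a + N * b"
  define E2 where "E2 = 2*a + (N - 2*\<alpha>) * b"
  define E3 where "E3 = (p+1)*a + (N + \<gamma>) * b"
  define F1 where "F1 = 2*a' + N * b'"
  define F2 where "F2 = 2*a' + (N - 2*\<alpha>) * b'"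
  define F3 where "F3 = (p+1)*a' + (N + \<gamma>) * b'"
  have Epos: "E1 > 0" "E2 > 0" "E3 > 0" using ab al N2 p g unfolding E1_def E2_def E3_def
    by (auto intro!: add_pos_nonneg mult_nonneg_nonneg)
  have Fpos: "F1 > 0" "F2 > 0" "F3 > 0" using ab al N2 p g unfolding F1_def F2_def F3_def
    by (auto intro!: add_pos_nonneg mult_nonneg_nonneg)
  have Flt: "F1 < F3" "F2 < F3"
  proof -
    have "(p - 1) * a' > 0" using p ab by simp
    moreover have "\<gamma> * b' \<ge> 0" "(\<gamma> + 2*\<alpha>) * b' \<ge> 0" using g al ab by auto
    ultimately show "F1 < F3" "F2 < F3" unfolding F1_def F3_def F2_def by (auto simp: algebra_simps)
  qed
  have hm[measurable]: "\<psi> \<in> borel_measurable borel" using \<psi>(1) by (rule Hrd_meas)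
  define t1 where "t1 = T1 \<psi>"
  define t2 where "t2 = frac_grad_sq \<alpha> \<psi>"
  define P where "P = Pw \<gamma> p \<psi>"
  have t: "t1 \<ge> 0" "t2 \<ge> 0" "P \<ge> 0" unfolding t1_def t2_def P_def
    using T1_nonneg T2_nonneg Pw_nonneg by auto
  have Kd: "Kfun \<alpha> \<gamma> p a b \<psi> = 1/2 * (E1 * t1 + E2 * t2) - E3 / (p+1) * P"
    unfolding Kfun_eq[OF hm pp(1)] E1_def E2_def E3_def N_def t1_def t2_def P_def by simp
  have Kd': "Kfun \<alpha> \<gamma> p a' b' \<psi> = 1/2 * (F1 * t1 + F2 * t2) - F3 / (p+1) * P"
    unfolding Kfun_eq[OF hm pp(1)] F1_def F2_def F3_def N_def t1_def t2_def P_def by simp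
  have act: "action \<alpha> \<gamma> p (scaling a' b' l \<psi>) = 1/2 * (l powr F1 * t1 + l powr F2 * t2) - l powr F3 * (P/(p+1))"
    if "l > 0" for l
    unfolding line_action[OF hm that] F1_def F2_def F3_def t1_def t2_def P_def N_def by simp
  have kk: "Kfun \<alpha> \<gamma> p a b (scaling a' b' l \<psi>) = 1/2 * (E1 * l powr F1 * t1 + E2 * l powr F2 * t2) - E3/(p+1) * l powr F3 * P"
    if "l > 0" for l
    unfolding line_K[OF hm that pp(1)] E1_def E2_def E3_def F1_def F2_def F3_def t1_def t2_def P_def N_def by simp
  have a1: "action \<alpha> \<gamma> p \<psi> = 1/2 * (t1 + t2) - P/(p+1)"
    using act[of 1] by (simp add: scaling1)
  have "Kfun \<alpha> \<gamma> p a' b' \<psi> > 0"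
  proof (rule ccontr)
    assume "\<not> Kfun \<alpha> \<gamma> p a' b' \<psi> > 0"
    then have K': "1/2 * (F1 * t1 + F2 * t2) \<le> F3 / (p+1) * P" using Kd' by simp
    have Ppos: "P > 0"
    proof (rule ccontr)
      assume "\<not> P > 0"
      then have P0: "P = 0" using t by simp
      then have "F1 * t1 + F2 * t2 \<le> 0" using K' by simp
      moreover have "F1 * t1 \<ge> 0" "F2 * t2 \<ge> 0" using Fpos t by auto
      ultimately have "F1 * t1 = 0" "F2 * t2 = 0" by linarith+
      then have "t1 = 0" "t2 = 0" using Fpos by auto
      then show False using \<psi>(3) Kd P0 by simp
    qed
    obtain L where L: "L \<ge> 1" "1/2 * (E1 * L powr F1 * t1 + E2 * L powr F2 * t2) - E3/(p+1) * L powr F3 * P \<le> 0"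
      using ev_neg[OF Ppos Flt, of "E3/(p+1)" E1 t1 E2 t2] Epos pp by auto
    have kL: "Kfun \<alpha> \<gamma> p a b (scaling a' b' L \<psi>) \<le> 0" using L kk[of L] by simp
    have k1: "Kfun \<alpha> \<gamma> p a b (scaling a' b' 1 \<psi>) \<ge> 0" using \<psi>(3) by (simp add: scaling1)
    have PP: "Pw \<gamma> p \<psi> > 0" using Ppos unfolding P_def .
    obtain l where l: "1 \<le> l" "l \<le> L" "mval \<alpha> \<gamma> p a b TYPE('n) \<le> ereal (action \<alpha> \<gamma> p (scaling a' b' l \<psi>))"
      using key[OF \<psi>(1) PP _ L(1) pp(1) k1 kL] by auto
    have K'': "1/2 * (F1 * t1 + F2 * t2) \<le> F3 * (P / (p+1))" using K' by simp
    have "action \<alpha> \<gamma> p (scaling a' b' l \<psi>) \<le> action \<alpha> \<gamma> p \<psi>"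
      unfolding act[of l, OF order_less_le_trans[OF zero_less_one l(1)]] a1 using l(1) t Fpos Flt K''
      by (intro mono_up) auto
    then have "mval \<alpha> \<gamma> p a b TYPE('n) \<le> ereal (action \<alpha> \<gamma> p \<psi>)"
      using l(3) by (meson ereal_less_eq(3) order_trans)
    then show False using \<psi>(2) by simp
  qed
  then show "\<psi> \<in> Aset \<alpha> \<gamma> p a' b'" using \<psi> meq by (simp add: Aset_def)
qed

theorem lemma8p2:
  fixes \<alpha> \<gamma> p :: real
  assumes N2: "CARD('n::finite) \<ge> 2"
    and g: "\<gamma> \<ge> 0"
    and al: "real CARD('n) / (2 * real CARD('n) - 1) < \<alpha>" "\<alpha> < 1"
    and p: "p > 1"
    and e1: "2 < p + 1 - 2 * \<gamma> / (real CARD('n) - 2 * \<alpha>)"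
    and e2: "p + 1 - 2 * \<gamma> / (real CARD('n) - 2 * \<alpha>)
               < 2 * real CARD('n) / (real CARD('n) - 2 * \<alpha>)"
    and ab: "a > 0" "b \<ge> 0" "a' > 0" "b' \<ge> 0"
  shows "(Aset \<alpha> \<gamma> p a b :: (real^'n \<Rightarrow> complex) set) = Aset \<alpha> \<gamma> p a' b'"
proof -
  have "real CARD('n) / (2 * real CARD('n) - 1) > 0" using N2 by (intro divide_pos_pos) auto
  then have a0: "\<alpha> > 0" using al(1) by linarith
  have meq: "mval \<alpha> \<gamma> p a b TYPE('n) = mval \<alpha> \<gamma> p a' b' TYPE('n)"
    using m_le[OF p a0 al(2) N2 g ab(1,2,3,4)] m_le[OF p a0 al(2) N2 g ab(3,4,1,2)] by (rule antisym)
  show ?thesis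
    using A_sub[OF p a0 al(2) N2 g ab(1,2,3,4) meq] A_sub[OF p a0 al(2) N2 g ab(3,4,1,2) meq[symmetric]]
    by (rule subset_antisym)
qed
end
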